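(* Let $\mathcal T=(S,\Sigma,\kappa)$ be an STS and $B\in\Sigma$. Suppose $A\in\Sigma$ is an attractor, i.e., $\mathbb P^{\mathcal T}_\mu(\mathbf{GF}A)=1$ for every $\mu\in\mathrm{Dist}(S)$, and suppose there is $p>0$ such that for every $\nu\in\mathrm{Dist}(S)$ with $\nu(A\cap\overline{\widetilde B})=1$ we have $\mathbb P^{\mathcal T}_\nu(\mathbf F B)\ge p$. Then $\mathcal T$ is decisive with respect to $B$.
   Context: A stochastic transition system (STS) is a triple $\mathcal T=(S,\Sigma,\kappa)$ where $(S,\Sigma)$ is a measurable space and $\kappa:S\times\Sigma\to[0,1]$ is a Markov kernel. $\mathrm{Dist}(S)$: probability distributions on $(S,\Sigma)$; $\delta_s$: Dirac at $s$. $\mathbb P^{\mathcal T}_\mu$ is the probability measure on runs $S^\omega$ (with the $\sigma$-algebra generated by cylinders) induced by initial distribution $\mu$ and kernel $\kappa$. $\overline C=S\setminus C$; $\mathbf F B$: runs visiting $B$ at some step; $\mathbf{GF}A$: runs visiting $A$ infinitely often. $\widetilde B=\{s\in S:\mathbb P^{\mathcal T}_{\delta_s}(\mathbf F B)=0\}$ (assumed measurable). $\mathcal T$ is decisive w.r.t. $B$ if for every $\mu$, $\mathbb P^{\mathcal T}_\mu(\mathbf F B\vee\mathbf F\widetilde B)=1$. *)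

theory Defs
  imports "HOL-Probability.Probability"
begin

definition markov_kernel :: "'a measure \<Rightarrow> ('a \<Rightarrow> 'a measure) \<Rightarrow> bool" where
  "markov_kernel M K \<longleftrightarrow> K \<in> M \<rightarrow>\<^sub>M prob_algebra M"

definition dist_on :: "'a measure \<Rightarrow> 'a measure \<Rightarrow> bool" where
  "dist_on M \<mu> \<longleftrightarrow> sets \<mu> = sets M \<and> prob_space \<mu>"

fun cyl_weight :: "('a \<Rightarrow> 'a measure) \<Rightarrow> 'a set list \<Rightarrow> 'a \<Rightarrow> ennreal" where
  "cyl_weight K [] s = 1"
| "cyl_weight K (A # As) s = indicator A s * (\<integral>\<^sup>+ t. cyl_weight K As t \<partial>(K s))"

definition cylinder :: "'a measure \<Rightarrow> 'a set list \<Rightarrow> 'a stream set" where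
  "cylinder M As = {\<omega> \<in> space (stream_space M). \<forall>i < length As. \<omega> !! i \<in> As ! i}"

definition is_run_measure ::
  "'a measure \<Rightarrow> ('a \<Rightarrow> 'a measure) \<Rightarrow> 'a measure \<Rightarrow> 'a stream measure \<Rightarrow> bool" where
  "is_run_measure M K \<mu> P \<longleftrightarrow>
     sets P = sets (stream_space M) \<and> prob_space P \<and>
     (\<forall>As. set As \<subseteq> sets M \<longrightarrow>
        emeasure P (cylinder M As) = (\<integral>\<^sup>+ s. cyl_weight K As s \<partial>\<mu>))"

definition evF :: "'a measure \<Rightarrow> 'a set \<Rightarrow> 'a stream set" where
  "evF M B = {\<omega> \<in> space (stream_space M). \<exists>i. \<omega> !! i \<in> B}"

definition evGF :: "'a measure \<Rightarrow> 'a set \<Rightarrow> 'a stream set" where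
  "evGF M A = {\<omega> \<in> space (stream_space M). \<forall>n. \<exists>i\<ge>n. \<omega> !! i \<in> A}"

definition Btilde :: "'a measure \<Rightarrow> ('a measure \<Rightarrow> 'a stream measure) \<Rightarrow> 'a set \<Rightarrow> 'a set" where
  "Btilde M Pr B = {s \<in> space M. measure (Pr (return M s)) (evF M B) = 0}"

definition decisive :: "'a measure \<Rightarrow> ('a measure \<Rightarrow> 'a stream measure) \<Rightarrow> 'a set \<Rightarrow> bool" where
  "decisive M Pr B \<longleftrightarrow>
     (\<forall>\<mu>. dist_on M \<mu> \<longrightarrow> measure (Pr \<mu>) (evF M B \<union> evF M (Btilde M Pr B)) = 1)"

end

theory Submission
  imports Defs
begin


lemma cylinder_Cons: "cylinder M (A # As) = {\<omega>\<in>streams (space M). shd \<omega> \<in> A \<and> stl \<omega> \<in> cylinder M As}"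
proof -
  have "\<And>\<omega>. \<omega> \<in> streams (space M) \<Longrightarrow> (\<forall>i<length (A#As). \<omega> !! i \<in> (A # As) ! i)
     \<longleftrightarrow> shd \<omega> \<in> A \<and> (\<forall>i<length As. stl \<omega> !! i \<in> As ! i)"
    by (simp only: length_Cons All_less_Suc2 nth_Cons_0 nth_Cons_Suc snth.simps)
  then show ?thesis
    unfolding cylinder_def space_stream_space using streams_stl by blast
qed

lemma cylinder_scylinder: "cylinder M As = scylinder (space M) As"
  by (induction As) (simp add: cylinder_def space_stream_space, simp add: cylinder_Cons)

lemma scyl_Int_stable: "Int_stable (scylinder (space M) ` lists (sets M))"
proof (rule Int_stableI_image)
  fix xs ys assume "xs \<in> lists (sets M)" "ys \<in> lists (sets M)"
  then show "\<exists>zs\<in>lists (sets M). scylinder (space M) xs \<inter> scylinder (space M) ys = scylinder (space M) zs"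
  proof (induction xs arbitrary: ys)
    case Nil then show ?case
      by (auto simp add: Int_absorb1 scylinder_streams)
  next
    case xs: (Cons x xs)
    show ?case
    proof (cases ys)
      case Nil with xs.hyps show ?thesis
        by (auto simp add: Int_absorb2 scylinder_streams intro!: bexI[of _ "x#xs"])
    next
      case ys: (Cons y ys')
      with xs.IH[of ys'] xs.prems obtain zs where
        "zs \<in> lists (sets M)" and eq: "scylinder (space M) xs \<inter> scylinder (space M) ys' = scylinder (space M) zs"
        by auto
      show ?thesis
      proof (intro bexI[of _ "(x \<inter> y)#zs"])
        show "x \<inter> y # zs \<in> lists (sets M)"
          using \<open>zs\<in>lists (sets M)\<close> xs ys by (auto intro: sets.Int)
        show "scylinder (space M) (x # xs) \<inter> scylinder (space M) ys = scylinder (space M) (x \<inter> y # zs)"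
          by (auto simp add: eq[symmetric] ys)
      qed
    qed
  qed
qed

lemma scyl_snth: "A \<in> sets M \<Longrightarrow> scylinder (space M) (replicate i (space M) @ [A]) = (\<lambda>s. s !! i) -` A \<inter> streams (space M)"
  by (induction i) (auto simp add: streams_shd streams_stl cong: conj_cong)

lemma sets_stream_gen:
  "sets (stream_space M) = sigma_sets (streams (space M)) (scylinder (space M) ` lists (sets M))"
proof -
  let ?G = "scylinder (space M) ` lists (sets M)"
  have Pw: "?G \<subseteq> Pow (streams (space M))" using scylinder_streams by auto
  let ?N = "sigma (streams (space M)) ?G"
  have "sets (stream_space M) \<subseteq> sets ?N"
  proof (rule sets_stream_space_in_sets)
    show "space ?N = streams (space M)" using Pw by simp
    fix i show "(\<lambda>x. x !! i) \<in> ?N \<rightarrow>\<^sub>M M"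
    proof (rule measurableI)
      fix x assume "x \<in> space ?N" then show "x !! i \<in> space M"
        using Pw by (simp add: snth_in)
    next
      fix A assume A: "A \<in> sets M"
      have "(\<lambda>x. x !! i) -` A \<inter> space ?N = scylinder (space M) (replicate i (space M) @ [A])"
        using Pw A by (simp add: scyl_snth)
      also have "\<dots> \<in> sets ?N" using A Pw by (intro in_measure_of) auto
      finally show "(\<lambda>x. x !! i) -` A \<inter> space ?N \<in> sets ?N" .
    qed
  qed
  moreover have "sets ?N \<subseteq> sets (stream_space M)"
    using Pw by (subst sigma_le_sets) (auto intro!: sets_scylinder simp: space_stream_space)
  ultimately show ?thesis using Pw by simp
qed

lemma stream_uniq:
  assumes "prob_space P1" "prob_space P2" "sets P1 = sets (stream_space M)" "sets P2 = sets (stream_space M)"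
    and eq: "\<And>As. set As \<subseteq> sets M \<Longrightarrow> emeasure P1 (cylinder M As) = emeasure P2 (cylinder M As)"
  shows "P1 = P2"
proof (rule stream_space_eq_scylinder[where G="sets M" and C="{space M}" and S=M])
  show "sets M = sets (sigma (space M) (sets M))" by simp
  fix xs assume "xs \<in> lists (sets M)"
  then show "emeasure P1 (scylinder (space M) xs) = emeasure P2 (scylinder (space M) xs)"
    using eq[of xs] by (auto simp: cylinder_scylinder)
qed (use assms in \<open>auto intro: sets.Int_stable dest: sets.sets_into_space\<close>)




locale sts =
  fixes M :: "'a measure" and K Pr
  assumes kernel: "markov_kernel M K"
  and runs: "\<And>\<mu>. dist_on M \<mu> \<Longrightarrow> is_run_measure M K \<mu> (Pr \<mu>)"
begin

definition Q where "Q s = Pr (return M s)"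

lemma K_meas: "K \<in> M \<rightarrow>\<^sub>M prob_algebra M" using kernel by (simp add: markov_kernel_def)
lemma K_sub: "K \<in> M \<rightarrow>\<^sub>M subprob_algebra M" using K_meas by (rule measurable_prob_algebraD)

lemma K_space: "s \<in> space M \<Longrightarrow> K s \<in> space (prob_algebra M)"
  using measurable_space[OF K_meas] by blast

lemma dist_K: "s \<in> space M \<Longrightarrow> dist_on M (K s)"
  using K_space by (simp add: dist_on_def space_prob_algebra)

lemma dist_ret: "s \<in> space M \<Longrightarrow> dist_on M (return M s)"
  by (simp add: dist_on_def prob_space_return)

lemma Pr_prob: "dist_on M \<mu> \<Longrightarrow> prob_space (Pr \<mu>)"
  using runs by (simp add: is_run_measure_def)
lemma Pr_sets: "dist_on M \<mu> \<Longrightarrow> sets (Pr \<mu>) = sets (stream_space M)"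
  using runs by (simp add: is_run_measure_def)
lemma Pr_space: "dist_on M \<mu> \<Longrightarrow> space (Pr \<mu>) = streams (space M)"
  using Pr_sets[THEN sets_eq_imp_space_eq] by (simp add: space_stream_space)
lemma Pr_cyl: "dist_on M \<mu> \<Longrightarrow> set As \<subseteq> sets M \<Longrightarrow> emeasure (Pr \<mu>) (cylinder M As) = (\<integral>\<^sup>+ s. cyl_weight K As s \<partial>\<mu>)"
  using runs by (simp add: is_run_measure_def)

lemma cw_meas: "set As \<subseteq> sets M \<Longrightarrow> cyl_weight K As \<in> borel_measurable M"
proof (induction As)
  case Nil then show ?case by simp
next
  case (Cons A As)
  then have [measurable]: "(\<lambda>s. \<integral>\<^sup>+ t. cyl_weight K As t \<partial>(K s)) \<in> borel_measurable M"
    by (intro measurable_compose[OF K_sub nn_integral_measurable_subprob_algebra]) auto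
  have [measurable]: "A \<in> sets M" using Cons.prems by simp
  have "(\<lambda>s. cyl_weight K (A#As) s) \<in> borel_measurable M"
    unfolding cyl_weight.simps by measurable
  then show ?case by simp
qed

lemma Q_cyl: "s \<in> space M \<Longrightarrow> set As \<subseteq> sets M \<Longrightarrow> emeasure (Q s) (cylinder M As) = cyl_weight K As s"
  unfolding Q_def by (simp add: Pr_cyl dist_ret nn_integral_return cw_meas)

lemma Q_meas: "Q \<in> M \<rightarrow>\<^sub>M prob_algebra (stream_space M)"
proof (rule measurable_prob_algebra_generated[OF sets_stream_gen scyl_Int_stable])
  show "scylinder (space M) ` lists (sets M) \<subseteq> Pow (streams (space M))"
    using scylinder_streams by auto
  fix a assume "a \<in> space M"
  then show "prob_space (Q a)" "sets (Q a) = sets (stream_space M)"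
    unfolding Q_def by (simp_all add: Pr_prob Pr_sets dist_ret)
next
  fix X assume "X \<in> scylinder (space M) ` lists (sets M)"
  then obtain As where As: "set As \<subseteq> sets M" "X = cylinder M As"
    by (auto simp: cylinder_scylinder)
  have "(\<lambda>a. emeasure (Q a) X) \<in> borel_measurable M \<longleftrightarrow> cyl_weight K As \<in> borel_measurable M"
    by (rule measurable_cong) (simp add: As Q_cyl)
  then show "(\<lambda>a. emeasure (Q a) X) \<in> borel_measurable M" using cw_meas As by simp
qed

lemma Q_sub: "Q \<in> M \<rightarrow>\<^sub>M subprob_algebra (stream_space M)"
  using Q_meas by (rule measurable_prob_algebraD)

lemma Q_emeas_meas[measurable]: "X \<in> sets (stream_space M) \<Longrightarrow> (\<lambda>s. emeasure (Q s) X) \<in> borel_measurable M"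
  using measurable_compose[OF Q_sub measurable_emeasure_subprob_algebra] .

lemma dist_space: "dist_on M \<mu> \<Longrightarrow> \<mu> \<in> space (prob_algebra M)"
  by (simp add: dist_on_def space_prob_algebra)

lemma M2: assumes "dist_on M \<mu>" shows "Pr \<mu> = \<mu> \<bind> Q"
proof (rule stream_uniq[where M=M])
  show "prob_space (Pr \<mu>)" by (rule Pr_prob[OF assms])
  show "sets (Pr \<mu>) = sets (stream_space M)" by (rule Pr_sets[OF assms])
  show "prob_space (\<mu> \<bind> Q)" using prob_space_bind'[OF dist_space[OF assms] Q_meas] .
  show "sets (\<mu> \<bind> Q) = sets (stream_space M)" using sets_bind'[OF dist_space[OF assms] Q_meas] .
  fix As assume As: "set As \<subseteq> sets M"
  have sp: "space \<mu> = space M" using assms unfolding dist_on_def by (metis sets_eq_imp_space_eq)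
  have "emeasure (\<mu> \<bind> Q) (cylinder M As) = (\<integral>\<^sup>+x. emeasure (Q x) (cylinder M As) \<partial>\<mu>)"
  proof (rule emeasure_bind_prob_algebra[OF dist_space[OF assms] Q_meas])
    show "cylinder M As \<in> sets (stream_space M)"
      unfolding cylinder_scylinder using As by (intro sets_scylinder) auto
  qed
  also have "\<dots> = (\<integral>\<^sup>+x. cyl_weight K As x \<partial>\<mu>)"
    using As by (intro nn_integral_cong) (simp add: sp Q_cyl)
  finally show "emeasure (Pr \<mu>) (cylinder M As) = emeasure (\<mu> \<bind> Q) (cylinder M As)"
    using Pr_cyl[OF assms As] by simp
qed

lemma M2': assumes "dist_on M \<mu>" "X \<in> sets (stream_space M)"
  shows "emeasure (Pr \<mu>) X = (\<integral>\<^sup>+s. emeasure (Q s) X \<partial>\<mu>)"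
  unfolding M2[OF assms(1)] by (rule emeasure_bind_prob_algebra[OF dist_space[OF assms(1)] Q_meas assms(2)])


lemma M1: assumes s: "s \<in> space M"
  shows "Q s = distr (Pr (K s)) (stream_space M) (\<lambda>\<omega>. s ## \<omega>)"
proof (rule stream_uniq[where M=M])
  have dK: "dist_on M (K s)" using dist_K[OF s] .
  have sK: "sets (Pr (K s)) = sets (stream_space M)" using Pr_sets[OF dK] .
  have spK: "space (Pr (K s)) = streams (space M)" using Pr_space[OF dK] .
  have meas: "(\<lambda>\<omega>. s ## \<omega>) \<in> Pr (K s) \<rightarrow>\<^sub>M stream_space M"
    using s by (subst measurable_cong_sets[OF sK refl]) measurable
  show "prob_space (Q s)" unfolding Q_def by (rule Pr_prob[OF dist_ret[OF s]])
  show "sets (Q s) = sets (stream_space M)" unfolding Q_def by (rule Pr_sets[OF dist_ret[OF s]])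
  show "prob_space (distr (Pr (K s)) (stream_space M) (\<lambda>\<omega>. s ## \<omega>))"
    by (rule prob_space.prob_space_distr[OF Pr_prob[OF dK] meas])
  show "sets (distr (Pr (K s)) (stream_space M) (\<lambda>\<omega>. s ## \<omega>)) = sets (stream_space M)" by simp
  interpret PK: prob_space "Pr (K s)" by (rule Pr_prob[OF dK])
  fix As assume As: "set As \<subseteq> sets M"
  have cs: "cylinder M As \<in> sets (stream_space M)"
    unfolding cylinder_scylinder using As by (intro sets_scylinder) auto
  show "emeasure (Q s) (cylinder M As) = emeasure (distr (Pr (K s)) (stream_space M) (\<lambda>\<omega>. s ## \<omega>)) (cylinder M As)"
  proof (cases As)
    case Nil
    have "(\<lambda>\<omega>. s ## \<omega>) -` cylinder M As \<inter> space (Pr (K s)) = space (Pr (K s))"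
      using s by (auto simp: Nil cylinder_scylinder spK)
    then show ?thesis
      using Q_cyl[OF s As] cs by (simp add: emeasure_distr[OF meas] Nil PK.emeasure_space_1)
  next
    case (Cons A As')
    have As': "set As' \<subseteq> sets M" "A \<in> sets M" using As Cons by auto
    have "(\<lambda>\<omega>. s ## \<omega>) -` cylinder M As \<inter> space (Pr (K s)) = (if s \<in> A then cylinder M As' else {})"
      using s scylinder_streams[of "space M" As']
      by (auto simp: Cons cylinder_scylinder spK)
    then have "emeasure (distr (Pr (K s)) (stream_space M) (\<lambda>\<omega>. s ## \<omega>)) (cylinder M As)
       = indicator A s * emeasure (Pr (K s)) (cylinder M As')"
      using cs by (simp add: emeasure_distr[OF meas] indicator_def)
    also have "\<dots> = cyl_weight K As s"
      using Pr_cyl[OF dK As'(1)] by (simp add: Cons)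
    finally show ?thesis using Q_cyl[OF s As] by simp
  qed
qed

lemma step:
  assumes s: "s \<in> space M" and D: "D \<in> sets M" and Y: "Y \<in> sets (stream_space M)"
  shows "emeasure (Q s) {\<omega>\<in>space (stream_space M). shd \<omega> \<in> D \<and> stl \<omega> \<in> Y}
       = indicator D s * (\<integral>\<^sup>+t. emeasure (Q t) Y \<partial>K s)"
proof -
  have dK: "dist_on M (K s)" using dist_K[OF s] .
  have sK: "sets (Pr (K s)) = sets (stream_space M)" using Pr_sets[OF dK] .
  have spK: "space (Pr (K s)) = streams (space M)" using Pr_space[OF dK] .
  have meas: "(\<lambda>\<omega>. s ## \<omega>) \<in> Pr (K s) \<rightarrow>\<^sub>M stream_space M"
    using s by (subst measurable_cong_sets[OF sK refl]) measurable
  have Ysub: "Y \<subseteq> streams (space M)"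
    using sets.sets_into_space[OF Y] by (simp add: space_stream_space)
  have X: "{\<omega>\<in>space (stream_space M). shd \<omega> \<in> D \<and> stl \<omega> \<in> Y} \<in> sets (stream_space M)"
    using D Y by measurable
  have "(\<lambda>\<omega>. s ## \<omega>) -` {\<omega>\<in>space (stream_space M). shd \<omega> \<in> D \<and> stl \<omega> \<in> Y} \<inter> space (Pr (K s))
     = (if s \<in> D then Y else {})"
    using s Ysub by (auto simp: spK space_stream_space)
  then have "emeasure (Q s) {\<omega>\<in>space (stream_space M). shd \<omega> \<in> D \<and> stl \<omega> \<in> Y}
      = indicator D s * emeasure (Pr (K s)) Y"
    unfolding M1[OF s] using X by (simp add: emeasure_distr[OF meas] indicator_def)
  also have "\<dots> = indicator D s * (\<integral>\<^sup>+t. emeasure (Q t) Y \<partial>K s)"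
    using M2'[OF dK Y] by simp
  finally show ?thesis .
qed

end



lemma ar: fixes c :: ennreal and p :: real
  assumes h: "c \<le> c * (1 - ennreal p)" and c1: "c \<le> 1" and p: "p > 0" shows "c = 0"
proof -
  obtain r where r: "c = ennreal r" "0 \<le> r" using c1
    by (metis ennreal_cases ennreal_le_1 ennreal_one_neq_top top.extremum_uniqueI)
  define q where "q = max 0 (1 - p)"
  have q: "0 \<le> q" "q < 1" using p by (auto simp: q_def)
  have "1 - ennreal p = ennreal (1 - p)"
    using p by (simp add: ennreal_minus[symmetric])
  also have "\<dots> = ennreal q" by (simp add: q_def ennreal_neg max_def)
  finally have "c * (1 - ennreal p) = ennreal (r * q)"
    using r q by (simp add: ennreal_mult)
  with h r q have "r \<le> r * q" by (simp add: ennreal_le_iff)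
  with q r have "r = 0"
    by (metis mult_left_le_one_le mult_le_cancel_left1 not_le order_antisym)
  with r show ?thesis by simp
qed

lemma all_le_Suc: "(\<forall>i\<le>Suc n. P i) \<longleftrightarrow> P 0 \<and> (\<forall>i\<le>n. P (Suc i))"
proof
  assume "\<forall>i\<le>Suc n. P i" then show "P 0 \<and> (\<forall>i\<le>n. P (Suc i))" by auto
next
  assume h: "P 0 \<and> (\<forall>i\<le>n. P (Suc i))"
  show "\<forall>i\<le>Suc n. P i"
  proof (intro allI impI)
    fix i assume "i \<le> Suc n" then show "P i" using h by (cases i) auto
  qed
qed

lemma ex_le_Suc: "(\<exists>i\<le>Suc n. P i) \<longleftrightarrow> P 0 \<or> (\<exists>i\<le>n. P (Suc i))"
proof
  assume "\<exists>i\<le>Suc n. P i"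
  then obtain i where "i \<le> Suc n" "P i" by blast
  then show "P 0 \<or> (\<exists>i\<le>n. P (Suc i))" by (cases i) auto
next
  assume "P 0 \<or> (\<exists>i\<le>n. P (Suc i))"
  then show "\<exists>i\<le>Suc n. P i" by auto
qed

context sts begin

lemma sets_K: "s \<in> space M \<Longrightarrow> sets (K s) = sets M"
  using dist_K by (simp add: dist_on_def)
lemma space_K: assumes "s \<in> space M" shows "space (K s) = space M"
  using sets_eq_imp_space_eq[OF sets_K[OF assms]] .
lemma meas_K: assumes "s \<in> space M" "f \<in> borel_measurable M" shows "f \<in> borel_measurable (K s)"
  unfolding measurable_cong_sets[OF sets_K[OF assms(1)] refl] using assms(2) .
lemma prob_K: "s \<in> space M \<Longrightarrow> prob_space (K s)"
  using dist_K by (simp add: dist_on_def)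
lemma prob_Q: "s \<in> space M \<Longrightarrow> prob_space (Q s)"
  unfolding Q_def by (rule Pr_prob[OF dist_ret])
lemma sets_Q: "s \<in> space M \<Longrightarrow> sets (Q s) = sets (stream_space M)"
  unfolding Q_def by (rule Pr_sets[OF dist_ret])
lemma space_Q: assumes "s \<in> space M" shows "space (Q s) = space (stream_space M)"
  using sets_eq_imp_space_eq[OF sets_Q[OF assms]] .

lemma sets_step: assumes D: "D \<in> sets M" and Y: "Y \<in> sets (stream_space M)" shows
  "{\<omega>\<in>space (stream_space M). shd \<omega> \<in> D \<and> stl \<omega> \<in> Y} \<in> sets (stream_space M)"
proof -
  have "{\<omega>\<in>space (stream_space M). shd \<omega> \<in> D \<and> stl \<omega> \<in> Y}
    = (shd -` D \<inter> space (stream_space M)) \<inter> ((\<lambda>\<omega>. stl \<omega>) -` Y \<inter> space (stream_space M))"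
    by auto
  also have "\<dots> \<in> sets (stream_space M)"
    by (intro sets.Int measurable_sets[OF measurable_shd D] measurable_sets[OF measurable_stl Y])
  finally show ?thesis .
qed

lemma int_le_const:
  assumes s: "s \<in> space M" and f: "\<And>t. t \<in> space M \<Longrightarrow> f t \<le> c"
  shows "(\<integral>\<^sup>+t. f t \<partial>K s) \<le> c"
proof -
  have "(\<integral>\<^sup>+t. f t \<partial>K s) \<le> (\<integral>\<^sup>+t. c \<partial>K s)"
    using f by (intro nn_integral_mono) (simp add: space_K[OF s])
  also have "\<dots> = c" using prob_space.emeasure_space_1[OF prob_K[OF s]] by simp
  finally show ?thesis .
qed

lemma int_one: "s \<in> space M \<Longrightarrow> (\<integral>\<^sup>+t. emeasure (Q t) (space (stream_space M)) \<partial>K s) = 1"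
proof -
  assume s: "s \<in> space M"
  have "(\<integral>\<^sup>+t. emeasure (Q t) (space (stream_space M)) \<partial>K s) = (\<integral>\<^sup>+t. 1 \<partial>K s)"
  proof (intro nn_integral_cong)
    fix t assume "t \<in> space (K s)"
    then have t: "t \<in> space M" using space_K[OF s] by simp
    show "emeasure (Q t) (space (stream_space M)) = 1"
      using prob_space.emeasure_space_1[OF prob_Q[OF t]] space_Q[OF t] by simp
  qed
  also have "\<dots> = 1" using prob_space.emeasure_space_1[OF prob_K[OF s]] by simp
  finally show ?thesis .
qed

lemma main:
  fixes A B Bt :: "'a set" and p :: real
  assumes B[measurable]: "B \<in> sets M" and Bt[measurable]: "Bt \<in> sets M" and A[measurable]: "A \<in> sets M"
    and p: "p > 0"
    and attr: "\<And>s. s \<in> space M \<Longrightarrow> emeasure (Q s) (evGF M A) = 1"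
    and reachB: "\<And>s. s \<in> A \<Longrightarrow> s \<in> space M \<Longrightarrow> s \<notin> Bt \<Longrightarrow> emeasure (Q s) (evF M B) \<ge> ennreal p"
  shows "\<And>s. s \<in> space M \<Longrightarrow> emeasure (Q s) {\<omega>\<in>space (stream_space M). \<forall>i. \<omega> !! i \<notin> B \<union> Bt} = 0"
proof -
  define S where "S = stream_space M"
  define N where "N = B \<union> Bt"
  have N[measurable]: "N \<in> sets M" unfolding N_def by simp
  define E where "E = {\<omega>\<in>space S. \<forall>i. \<omega> !! i \<notin> N}"
  have E[measurable]: "E \<in> sets S" unfolding E_def S_def by measurable
  define u where "u s = emeasure (Q s) E" for s
  have spS: "space S = streams (space M)" by (simp add: S_def space_stream_space)
  have E_stl: "stl \<omega> \<in> E" if "\<omega> \<in> E" for \<omega>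
  proof -
    have a: "\<omega> \<in> streams (space M)" "\<And>i. \<omega> !! i \<notin> N" using that unfolding E_def spS by auto
    have "stl \<omega> !! i \<notin> N" for i using a(2)[of "Suc i"] by simp
    then show ?thesis unfolding E_def spS using streams_stl[OF a(1)] by simp
  qed
  have E_eq: "E = {\<omega>\<in>space S. shd \<omega> \<in> space M - N \<and> stl \<omega> \<in> E}"
  proof (intro set_eqI iffI)
    fix \<omega> assume w: "\<omega> \<in> E"
    then have a: "\<omega> \<in> streams (space M)" "\<And>i. \<omega> !! i \<notin> N" unfolding E_def spS by auto
    have "shd \<omega> \<notin> N" using a(2)[of 0] by simp
    then show "\<omega> \<in> {\<omega>\<in>space S. shd \<omega> \<in> space M - N \<and> stl \<omega> \<in> E}"
      using E_stl[OF w] streams_shd[OF a(1)] a(1) by (simp add: spS)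
  next
    fix \<omega> assume w: "\<omega> \<in> {\<omega>\<in>space S. shd \<omega> \<in> space M - N \<and> stl \<omega> \<in> E}"
    then have a: "\<omega> \<in> space S" "shd \<omega> \<notin> N" "\<forall>i. stl \<omega> !! i \<notin> N" unfolding E_def by auto
    have "\<forall>i. \<omega> !! i \<notin> N"
    proof
      fix i show "\<omega> !! i \<notin> N" using a by (cases i) auto
    qed
    then show "\<omega> \<in> E" using a unfolding E_def by auto
  qed
  have u_step: "u s = indicator (space M - N) s * (\<integral>\<^sup>+t. u t \<partial>K s)" if s: "s \<in> space M" for s
  proof -
    have "u s = emeasure (Q s) {\<omega>\<in>space S. shd \<omega> \<in> space M - N \<and> stl \<omega> \<in> E}"
      unfolding u_def by (rule arg_cong[where f="emeasure (Q s)"]) (rule E_eq)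
    also have "\<dots> = indicator (space M - N) s * (\<integral>\<^sup>+t. u t \<partial>K s)"
      unfolding u_def S_def using step[OF s _ E[unfolded S_def], of "space M - N"] by simp
    finally show ?thesis .
  qed
  have u_meas[measurable]: "u \<in> borel_measurable M" unfolding u_def
    using E by (simp add: S_def)
  have u1: "u s \<le> 1" if "s \<in> space M" for s
    unfolding u_def using prob_space.emeasure_le_1[OF prob_Q[OF that]] .
  define c where "c = (SUP s\<in>space M. u s)"
  have uc: "u s \<le> c" if "s \<in> space M" for s using that unfolding c_def by (rule SUP_upper)
  have c1: "c \<le> 1" unfolding c_def using u1 by (rule SUP_least)

  define av where "av n = {\<omega>\<in>space S. \<forall>i\<le>n. \<omega> !! i \<notin> B}" for n
  have av[measurable]: "av n \<in> sets S" for n unfolding av_def S_def by measurable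
  have av0: "av 0 = {\<omega>\<in>space S. shd \<omega> \<in> space M - B \<and> stl \<omega> \<in> space S}"
    unfolding av_def spS using streams_stl streams_shd by auto
  have avS: "av (Suc n) = {\<omega>\<in>space S. shd \<omega> \<in> space M - B \<and> stl \<omega> \<in> av n}" for n
    unfolding av_def spS
    apply (subst all_le_Suc)
    using streams_stl streams_shd by auto
  define a where "a n s = emeasure (Q s) (av n)" for n s
  have a_meas[measurable]: "a n \<in> borel_measurable M" for n
    unfolding a_def using av by (simp add: S_def)
  have a0: "a 0 s = indicator (space M - B) s" if s: "s \<in> space M" for s
    unfolding a_def av0 using step[OF s, of "space M - B" "space S"] int_one[OF s] by (simp add: S_def)
  have aS: "a (Suc n) s = indicator (space M - B) s * (\<integral>\<^sup>+t. a n t \<partial>K s)" if s: "s \<in> space M" for s n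
    unfolding a_def avS using step[OF s, of "space M - B" "av n"] av by (simp add: S_def)
  have ind: "indicator (space M - N) s \<le> (indicator (space M - B) s :: ennreal)" for s
    by (auto simp: indicator_def N_def)
  have u_a: "\<forall>s\<in>space M. u s \<le> c * a n s" for n
  proof (induction n)
    case 0
    show ?case
    proof
      fix s assume s: "s \<in> space M"
      show "u s \<le> c * a 0 s"
      proof (cases "s \<in> B")
        case True then show ?thesis using u_step[OF s] by (simp add: N_def)
      next
        case False then show ?thesis using uc[OF s] a0[OF s] s by simp
      qed
    qed
  next
    case (Suc n)
    show ?case
    proof
      fix s assume s: "s \<in> space M"
      have "(\<integral>\<^sup>+t. u t \<partial>K s) \<le> (\<integral>\<^sup>+t. c * a n t \<partial>K s)"
        using Suc by (intro nn_integral_mono) (simp add: space_K[OF s])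
      also have "\<dots> = c * (\<integral>\<^sup>+t. a n t \<partial>K s)"
        by (rule nn_integral_cmult) (rule meas_K[OF s a_meas])
      finally have "u s \<le> indicator (space M - B) s * (c * (\<integral>\<^sup>+t. a n t \<partial>K s))"
        unfolding u_step[OF s] by (intro mult_mono ind) auto
      then show "u s \<le> c * a (Suc n) s" unfolding aS[OF s] by (simp add: ac_simps)
    qed
  qed
  define q where "q = 1 - ennreal p"
  have uA: "u s \<le> c * q" if s: "s \<in> space M" and sA: "s \<in> A" for s
  proof (cases "s \<in> N")
    case True then show ?thesis using u_step[OF s] by simp
  next
    case False
    interpret QS: prob_space "Q s" by (rule prob_Q[OF s])
    have dec: "decseq av" unfolding decseq_def av_def by auto
    have lim: "(\<lambda>n. a n s) \<longlonglongrightarrow> emeasure (Q s) (\<Inter>n. av n)"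
      unfolding a_def using dec av by (intro Lim_emeasure_decseq) (auto simp: sets_Q[OF s] S_def)
    have "(\<lambda>n. c * a n s) \<longlonglongrightarrow> c * emeasure (Q s) (\<Inter>n. av n)"
      using c1 by (intro ennreal_tendsto_cmult lim) (metis ennreal_one_less_top le_less_trans)
    then have ule: "u s \<le> c * emeasure (Q s) (\<Inter>n. av n)"
      using u_a s by (intro LIMSEQ_le_const) auto
    have "(\<Inter>n. av n) = space (Q s) - evF M B"
      unfolding av_def evF_def space_Q[OF s] S_def by auto
    also have "emeasure (Q s) (space (Q s) - evF M B) = 1 - emeasure (Q s) (evF M B)"
    proof -
      have "evF M B \<in> sets (Q s)" unfolding sets_Q[OF s] evF_def by measurable
      then show ?thesis by (simp add: emeasure_compl QS.emeasure_space_1)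
    qed
    also have "\<dots> \<le> q"
      unfolding q_def using reachB[OF sA s] False by (intro ennreal_minus_mono) (auto simp: N_def)
    finally have "emeasure (Q s) (\<Inter>n. av n) \<le> q" .
    then have "c * emeasure (Q s) (\<Inter>n. av n) \<le> c * q" by (rule mult_left_mono) simp
    with \<open>u s \<le> c * emeasure (Q s) (\<Inter>n. av n)\<close> show ?thesis by (rule order_trans)
  qed
  define V where "V n = {\<omega>\<in>space S. \<exists>i\<le>n. \<omega> !! i \<in> A}" for n
  have V[measurable]: "V n \<in> sets S" for n unfolding V_def S_def by measurable
  define h where "h n s = emeasure (Q s) (E \<inter> V n)" for n s
  have h_meas[measurable]: "h n \<in> borel_measurable M" for n
    unfolding h_def using E V by (simp add: S_def)
  define H where "H = {\<omega>\<in>space S. shd \<omega> \<in> A \<and> stl \<omega> \<in> space S}"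
  have H0: "s \<in> space M \<Longrightarrow> s \<notin> A \<Longrightarrow> emeasure (Q s) H = 0" for s
    unfolding H_def using step[of s A "space S"] int_one by (simp add: S_def)
  have H[measurable]: "H \<in> sets S" unfolding H_def S_def by measurable
  have hA: "\<forall>s\<in>space M. h n s \<le> c * q" for n
  proof (induction n)
    case 0
    show ?case
    proof
      fix s assume s: "s \<in> space M"
      show "h 0 s \<le> c * q"
      proof (cases "s \<in> A")
        case True
        have "h 0 s \<le> u s" unfolding h_def u_def
          by (rule emeasure_mono) (use E in \<open>auto simp: sets_Q[OF s] S_def\<close>)
        then show ?thesis using uA[OF s True] by simp
      next
        case False
        have "E \<inter> V 0 \<subseteq> H" unfolding H_def V_def E_def spS using streams_stl by auto
        then have "h 0 s \<le> emeasure (Q s) H" unfolding h_def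
          by (rule emeasure_mono) (use H in \<open>auto simp: sets_Q[OF s] S_def\<close>)
        then show ?thesis using H0[OF s False] by simp
      qed
    qed
  next
    case (Suc n)
    show ?case
    proof
      fix s assume s: "s \<in> space M"
      show "h (Suc n) s \<le> c * q"
      proof (cases "s \<in> A")
        case True
        have "h (Suc n) s \<le> u s" unfolding h_def u_def
          by (rule emeasure_mono) (use E in \<open>auto simp: sets_Q[OF s] S_def\<close>)
        then show ?thesis using uA[OF s True] by simp
      next
        case False
        define T where "T = {\<omega>\<in>space S. shd \<omega> \<in> space M - A \<and> stl \<omega> \<in> E \<inter> V n}"
        have T: "T \<in> sets S" unfolding T_def S_def
          by (rule sets_step) (use E V in \<open>auto simp: S_def\<close>)
        have sub: "E \<inter> V (Suc n) \<subseteq> H \<union> T"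
        proof
          fix \<omega> assume w: "\<omega> \<in> E \<inter> V (Suc n)"
          then have ws: "\<omega> \<in> space S" "stl \<omega> \<in> space S" "shd \<omega> \<in> space M"
            unfolding E_def spS using streams_stl streams_shd by auto
          have stE: "stl \<omega> \<in> E" using w E_stl by blast
          from w have "shd \<omega> \<in> A \<or> (\<exists>i\<le>n. stl \<omega> !! i \<in> A)"
            unfolding V_def ex_le_Suc by simp
          then show "\<omega> \<in> H \<union> T"
            using ws stE unfolding H_def T_def V_def by auto
        qed
        have "h (Suc n) s \<le> emeasure (Q s) (H \<union> T)" unfolding h_def
          by (rule emeasure_mono[OF sub]) (use H T in \<open>auto simp: sets_Q[OF s] S_def\<close>)
        also have "\<dots> \<le> emeasure (Q s) H + emeasure (Q s) T"
          by (rule emeasure_subadditive) (use H T in \<open>auto simp: sets_Q[OF s] S_def\<close>)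
        also have "emeasure (Q s) T = (\<integral>\<^sup>+t. h n t \<partial>K s)"
          unfolding T_def h_def using step[OF s, of "space M - A" "E \<inter> V n"] E V False s
          by (simp add: S_def)
        also have "\<dots> \<le> c * q" using Suc by (intro int_le_const[OF s]) auto
        finally show ?thesis using H0[OF s False] by simp
      qed
    qed
  qed
  have uq: "u s \<le> c * q" if s: "s \<in> space M" for s
  proof -
    interpret QS: prob_space "Q s" by (rule prob_Q[OF s])
    have inc: "incseq (\<lambda>n. E \<inter> V n)"
    proof (rule incseq_SucI)
      fix n show "E \<inter> V n \<subseteq> E \<inter> V (Suc n)" unfolding V_def using le_SucI by blast
    qed
    have "(SUP n. h n s) = emeasure (Q s) (\<Union>n. E \<inter> V n)"
      unfolding h_def using inc E V by (intro SUP_emeasure_incseq) (auto simp: sets_Q[OF s] S_def)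
    moreover have "(SUP n. h n s) \<le> c * q" using hA s by (intro SUP_least) auto
    ultimately have 1: "emeasure (Q s) (\<Union>n. E \<inter> V n) \<le> c * q" by simp
    have GF: "evGF M A \<in> sets (Q s)" unfolding sets_Q[OF s] evGF_def by measurable
    have 2: "emeasure (Q s) (space (Q s) - evGF M A) = 0"
      using GF attr[OF s] by (simp add: emeasure_compl QS.emeasure_space_1)
    have "E \<subseteq> (\<Union>n. E \<inter> V n) \<union> (space (Q s) - evGF M A)"
    proof
      fix \<omega> assume w: "\<omega> \<in> E"
      then have wS: "\<omega> \<in> space S" unfolding E_def by blast
      show "\<omega> \<in> (\<Union>n. E \<inter> V n) \<union> (space (Q s) - evGF M A)"
      proof (cases "\<omega> \<in> evGF M A")
        case True
        then obtain i where "\<omega> !! i \<in> A" unfolding evGF_def by blast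
        then have "\<omega> \<in> V i" using wS unfolding V_def by blast
        then show ?thesis using w by blast
      next
        case False
        then show ?thesis using wS space_Q[OF s] by (simp add: S_def)
      qed
    qed
    moreover have UN: "(\<Union>n. E \<inter> V n) \<in> sets (Q s)"
      using E V by (auto simp: sets_Q[OF s] S_def)
    moreover have GFc: "space (Q s) - evGF M A \<in> sets (Q s)" using GF by (rule sets.compl_sets)
    ultimately have "u s \<le> emeasure (Q s) ((\<Union>n. E \<inter> V n) \<union> (space (Q s) - evGF M A))"
      unfolding u_def by (intro emeasure_mono sets.Un)
    also have "\<dots> \<le> emeasure (Q s) (\<Union>n. E \<inter> V n) + emeasure (Q s) (space (Q s) - evGF M A)"
      using UN GFc by (rule emeasure_subadditive)
    finally show ?thesis using 1 2 by simp
  qed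
  have "(SUP s\<in>space M. u s) \<le> c * q" using uq by (intro SUP_least)
  then have "c \<le> c * q" by (simp only: c_def[symmetric])
  then have c0: "c = 0" using ar c1 p unfolding q_def by blast
  fix s assume "s \<in> space M"
  then have "u s = 0" using uc c0 by (metis le_zero_eq)
  then show "emeasure (Q s) {\<omega>\<in>space (stream_space M). \<forall>i. \<omega> !! i \<notin> B \<union> Bt} = 0"
    unfolding u_def E_def N_def S_def .
qed

end

theorem mainTheorem4:
  fixes M :: "'a measure" and K :: "'a \<Rightarrow> 'a measure"
    and Pr :: "'a measure \<Rightarrow> 'a stream measure"
    and A B :: "'a set" and p :: real
  assumes kernel: "markov_kernel M K"
    and runs: "\<And>\<mu>. dist_on M \<mu> \<Longrightarrow> is_run_measure M K \<mu> (Pr \<mu>)"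
    and B: "B \<in> sets M"
    and Bt: "Btilde M Pr B \<in> sets M"
    and A: "A \<in> sets M"
    and attractor: "\<And>\<mu>. dist_on M \<mu> \<Longrightarrow> measure (Pr \<mu>) (evGF M A) = 1"
    and p: "p > 0"
    and reach: "\<And>\<nu>. dist_on M \<nu> \<Longrightarrow> measure \<nu> (A \<inter> (space M - Btilde M Pr B)) = 1
                   \<Longrightarrow> measure (Pr \<nu>) (evF M B) \<ge> p"
  shows "decisive M Pr B"
proof -
  interpret sts M K Pr using kernel runs by unfold_locales
  let ?Bt = "Btilde M Pr B"
  have attr: "emeasure (Q s) (evGF M A) = 1" if s: "s \<in> space M" for s
  proof -
    interpret QS: prob_space "Q s" by (rule prob_Q[OF s])
    show ?thesis using attractor[OF dist_ret[OF s]] QS.emeasure_eq_measure unfolding Q_def by simp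
  qed
  have reachB: "emeasure (Q s) (evF M B) \<ge> ennreal p" if sA: "s \<in> A" and s: "s \<in> space M" and sB: "s \<notin> ?Bt" for s
  proof -
    have "A \<inter> (space M - ?Bt) \<in> sets M" using A Bt by auto
    then have "measure (return M s) (A \<inter> (space M - ?Bt)) = 1"
      using sA s sB by (simp add: measure_return)
    then have "measure (Pr (return M s)) (evF M B) \<ge> p" using reach[OF dist_ret[OF s]] by simp
    interpret QS: prob_space "Q s" by (rule prob_Q[OF s])
    show ?thesis
      using \<open>measure (Pr (return M s)) (evF M B) \<ge> p\<close> QS.emeasure_eq_measure unfolding Q_def by simp
  qed
  define E0 where "E0 = {\<omega>\<in>space (stream_space M). \<forall>i. \<omega> !! i \<notin> B \<union> ?Bt}"
  have E0: "E0 \<in> sets (stream_space M)" unfolding E0_def using B Bt by measurable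
  have z: "emeasure (Q s) E0 = 0" if "s \<in> space M" for s
    unfolding E0_def by (rule main[OF B Bt A p attr reachB that])
  show ?thesis unfolding decisive_def
  proof (intro allI impI)
    fix \<mu> assume mu: "dist_on M \<mu>"
    interpret P: prob_space "Pr \<mu>" by (rule Pr_prob[OF mu])
    have sp: "space \<mu> = space M" using mu unfolding dist_on_def by (metis sets_eq_imp_space_eq)
    have "emeasure (Pr \<mu>) E0 = (\<integral>\<^sup>+s. emeasure (Q s) E0 \<partial>\<mu>)" by (rule M2'[OF mu E0])
    also have "\<dots> = (\<integral>\<^sup>+s. 0 \<partial>\<mu>)" by (intro nn_integral_cong) (simp add: sp z)
    finally have "measure (Pr \<mu>) E0 = 0" by (simp add: P.emeasure_eq_measure)
    moreover have "evF M B \<union> evF M ?Bt = space (Pr \<mu>) - E0"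
      unfolding Pr_space[OF mu] E0_def evF_def space_stream_space by auto
    moreover have "E0 \<in> P.events" using E0 Pr_sets[OF mu] by simp
    ultimately show "measure (Pr \<mu>) (evF M B \<union> evF M ?Bt) = 1" by (simp add: P.prob_compl)
  qed
qed

end
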